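(* Let $k>l\ge0$ be integers with $k+l\ge3$, let $\theta\in\mathbb{R}$, $\xi=e^{i\theta}$, $f:\mathbb{N}\to[0,\infty)$, and $A=\xi(a^\dagger)^ka^l+\xi^*(a^\dagger)^la^k+f(a^\dagger a)$ with domain $\mathcal{D}_0$. Assume that $f(n)n^{-(k+l)/2}$ admits an asymptotic expansion in powers of $n^{-1/2}$, $$f(n)n^{-(k+l)/2}\sim\kappa+\frac{L_1}{n^{1/2}}+\frac{L_2}{n}+\cdots$$ with $\kappa<2$. Then $A$ has deficiency indices $n_+=n_-=k-l$ (so $A$ is not essentially self-adjoint and its self-adjoint extensions are parametrized by $\mathrm{U}(k-l)$).
   Context: $\mathbb{N}=\{0,1,2,\dots\}$. $\mathcal{H}$ is a separable complex Hilbert space with orthonormal basis $(\phi_n)_{n\in\mathbb{N}}$; $\mathcal{D}_0$ is the set of finite linear combinations of the $\phi_n$. The operators $a,a^\dagger$ have domain $\mathcal{D}_0$ and act by $a\phi_n=\sqrt{n}\,\phi_{n-1}$ ($a\phi_0=0$), $a^\dagger\phi_n=\sqrt{n+1}\,\phi_{n+1}$, extended linearly. $f(a^\dagger a)$ has domain $\mathcal{D}_0$ and $f(a^\dagger a)\phi_n=f(n)\phi_n$. Deficiency indices: $n_\pm=\dim\operatorname{Ran}(A\pm i)^\perp$. A function $g:\mathbb{N}\to\mathbb{C}$ admits the asymptotic expansion $g(n)\sim\sum_{s\ge0}\lambda_sn^{-s/2}$ if for every $S\in\mathbb{N}$ there are $C,N$ with $|g(n)-\sum_{s=0}^S\lambda_sn^{-s/2}|\le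 Cn^{-(S+1)/2}$ for all $n\ge N$. *)

theory Defs
  imports "HOL-Analysis.Analysis" "HOL-Library.Function_Algebras"
begin

text \<open>The Hilbert space H is realized as l^2(N): the coordinate sequence of a vector
  with respect to the orthonormal basis phi_n.  phi_n is the n-th unit sequence.\<close>

definition l2 :: "(nat \<Rightarrow> complex) set" where
  "l2 = {x. summable (\<lambda>n. (cmod (x n))\<^sup>2)}"

text \<open>D_0: finite linear combinations of the phi_n = finitely supported sequences.\<close>
definition D0 :: "(nat \<Rightarrow> complex) set" where
  "D0 = {x. finite {n. x n \<noteq> 0}}"

definition l2_inner :: "(nat \<Rightarrow> complex) \<Rightarrow> (nat \<Rightarrow> complex) \<Rightarrow> complex" where
  "l2_inner u v = (\<Sum>n. u n * cnj (v n))"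

text \<open>Complex scalar multiplication on sequences, for the complex-linear dimension.\<close>
definition cscale :: "complex \<Rightarrow> (nat \<Rightarrow> complex) \<Rightarrow> (nat \<Rightarrow> complex)" where
  "cscale c x = (\<lambda>n. c * x n)"

text \<open>Annihilation: a phi_n = sqrt n phi_(n-1); in coordinates (a x)_m = sqrt(m+1) x_(m+1).\<close>
definition ann :: "(nat \<Rightarrow> complex) \<Rightarrow> (nat \<Rightarrow> complex)" where
  "ann x = (\<lambda>m. complex_of_real (sqrt (real (Suc m))) * x (Suc m))"

text \<open>Creation: a^dagger phi_n = sqrt(n+1) phi_(n+1); (a^dagger x)_m = sqrt m x_(m-1), (.)_0 = 0.\<close>
definition cre :: "(nat \<Rightarrow> complex) \<Rightarrow> (nat \<Rightarrow> complex)" where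
  "cre x = (\<lambda>m. if m = 0 then 0 else complex_of_real (sqrt (real m)) * x (m - 1))"

text \<open>f(a^dagger a) phi_n = f(n) phi_n.\<close>
definition numop :: "(nat \<Rightarrow> real) \<Rightarrow> (nat \<Rightarrow> complex) \<Rightarrow> (nat \<Rightarrow> complex)" where
  "numop f x = (\<lambda>n. complex_of_real (f n) * x n)"

definition opA :: "nat \<Rightarrow> nat \<Rightarrow> real \<Rightarrow> (nat \<Rightarrow> real) \<Rightarrow> (nat \<Rightarrow> complex) \<Rightarrow> (nat \<Rightarrow> complex)" where
  "opA k l \<theta> f x = (\<lambda>n.
      cis \<theta> * (cre ^^ k) ((ann ^^ l) x) n
    + cnj (cis \<theta>) * (cre ^^ l) ((ann ^^ k) x) n
    + numop f x n)"

definition range_perp :: "((nat \<Rightarrow> complex) \<Rightarrow> (nat \<Rightarrow> complex)) \<Rightarrow> complex \<Rightarrow> (nat \<Rightarrow> complex) set" where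
  "range_perp T c = {y \<in> l2. \<forall>x \<in> D0. l2_inner (\<lambda>n. T x n + c * x n) y = 0}"

text \<open>Deficiency indices n_+ = dim Ran(T + i)^\<bottom>, n_- = dim Ran(T - i)^\<bottom>
  (complex-linear dimension; the library's dim is 0 on infinite-dimensional sets).\<close>
definition def_plus :: "((nat \<Rightarrow> complex) \<Rightarrow> (nat \<Rightarrow> complex)) \<Rightarrow> nat" where
  "def_plus T = vector_space.dim cscale (range_perp T \<i>)"

definition def_minus :: "((nat \<Rightarrow> complex) \<Rightarrow> (nat \<Rightarrow> complex)) \<Rightarrow> nat" where
  "def_minus T = vector_space.dim cscale (range_perp T (- \<i>))"

definition has_asymp_expansion :: "(nat \<Rightarrow> real) \<Rightarrow> (nat \<Rightarrow> real) \<Rightarrow> bool" where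
  "has_asymp_expansion g lam \<longleftrightarrow>
     (\<forall>S::nat. \<exists>C N. \<forall>n\<ge>N.
        \<bar>g n - (\<Sum>s\<le>S. lam s * real n powr (- real s / 2))\<bar> \<le> C * real n powr (- (real S + 1) / 2))"

end

theory Submission
  imports Defs
begin

definition Qf :: "nat \<Rightarrow> real \<Rightarrow> real" where
  "Qf K x = (\<Prod>i<K. x + 1 + real i)"

definition rf :: "nat \<Rightarrow> nat \<Rightarrow> real" where
  "rf K n = sqrt (Qf K (real n))"

lemma Qf_pos: "x \<ge> 0 \<Longrightarrow> Qf K x > 0"
  unfolding Qf_def by (intro prod_pos) auto

lemma Qf_Suc_shift: "Qf (Suc K) x = (x + 1) * Qf K (x + 1)"
  unfolding Qf_def prod.lessThan_Suc_shift by (simp add: algebra_simps)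

lemma Qf_Suc: "Qf (Suc K) x = Qf K x * (x + 1 + real K)"
  unfolding Qf_def by simp

lemma ann_pow: "(ann ^^ l) x n = complex_of_real (rf l n) * x (n + l)"
proof (induction l arbitrary: n)
  case 0
  then show ?case by (simp add: rf_def Qf_def)
next
  case (Suc l)
  have "(ann ^^ Suc l) x n = ann ((ann ^^ l) x) n" by simp
  also have "\<dots> = complex_of_real (sqrt (real (Suc n))) * (complex_of_real (rf l (Suc n)) * x (Suc n + l))"
    by (simp add: ann_def Suc)
  also have "\<dots> = complex_of_real (rf (Suc l) n) * x (n + Suc l)"
    by (simp add: rf_def Qf_Suc_shift real_sqrt_mult add_ac)
  finally show ?case .
qed

lemma cre_pow: "(cre ^^ k) x n = (if k \<le> n then complex_of_real (rf k (n - k)) * x (n - k) else 0)"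
proof (induction k arbitrary: n)
  case 0
  then show ?case by (simp add: rf_def Qf_def)
next
  case (Suc k)
  have "(cre ^^ Suc k) x n = cre ((cre ^^ k) x) n" by simp
  also have "\<dots> = (if Suc k \<le> n then complex_of_real (rf (Suc k) (n - Suc k)) * x (n - Suc k) else 0)"
  proof (cases "Suc k \<le> n")
    case True
    have "rf (Suc k) (n - Suc k) = sqrt (real n) * rf k (n - 1 - k)"
      using True by (simp add: rf_def Qf_Suc real_sqrt_mult of_nat_diff mult.commute)
    then show ?thesis using True by (simp add: cre_def Suc)
  next
    case False
    then show ?thesis by (auto simp add: cre_def Suc)
  qed
  finally show ?case .
qed

definition Rc :: "nat \<Rightarrow> nat \<Rightarrow> nat \<Rightarrow> real" where
  "Rc k l n = rf k n * rf l n"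

lemma opA_formula:
  assumes "l < k"
  shows "opA k l \<theta> f x n =
    (if k \<le> n then cis \<theta> * complex_of_real (Rc k l (n - k)) * x (n - (k - l)) else 0)
  + (if l \<le> n then cnj (cis \<theta>) * complex_of_real (Rc k l (n - l)) * x (n + (k - l)) else 0)
  + complex_of_real (f n) * x n"
  using assms
  by (auto simp: opA_def cre_pow ann_pow numop_def Rc_def algebra_simps)

definition EqR :: "nat \<Rightarrow> nat \<Rightarrow> real \<Rightarrow> (nat \<Rightarrow> real) \<Rightarrow> complex \<Rightarrow> (nat \<Rightarrow> complex) \<Rightarrow> nat \<Rightarrow> complex" where
  "EqR k l \<theta> f c y m =
     cnj (cis \<theta>) * complex_of_real (if l \<le> m then Rc k l (m - l) else 0) * y (m + (k - l))
   + cis \<theta> * complex_of_real (if k \<le> m then Rc k l (m - k) else 0) * y (m - (k - l))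
   + (complex_of_real (f m) + cnj c) * y m"

definition ev :: "nat \<Rightarrow> nat \<Rightarrow> complex" where
  "ev m = (\<lambda>n. if n = m then 1 else 0)"

lemma ev_D0: "ev m \<in> D0"
  unfolding D0_def ev_def by simp

lemma inner_ev_sums:
  assumes "l < k"
  shows "(\<lambda>n. (opA k l \<theta> f (ev m) n + c * ev m n) * cnj (y n)) sums cnj (EqR k l \<theta> f c y m)"
proof -
  define d where "d = k - l"
  have d: "d > 0" using assms by (simp add: d_def)
  define A where "A = cis \<theta> * complex_of_real (if l \<le> m then Rc k l (m - l) else 0) * cnj (y (m + d))"
  define B where "B = cnj (cis \<theta>) * complex_of_real (if k \<le> m then Rc k l (m - k) else 0) * cnj (y (m - d))"
  define C where "C = (complex_of_real (f m) + c) * cnj (y m)"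
  have eq: "(\<lambda>n. (opA k l \<theta> f (ev m) n + c * ev m n) * cnj (y n)) =
     (\<lambda>n. ((if n = m + d then A else 0) + (if n = m - d then B else 0)) + (if n = m then C else 0))"
  proof
    fix n
    show "(opA k l \<theta> f (ev m) n + c * ev m n) * cnj (y n) =
      ((if n = m + d then A else 0) + (if n = m - d then B else 0)) + (if n = m then C else 0)"
    proof -
      have e1: "(if k \<le> n then cis \<theta> * complex_of_real (Rc k l (n - k)) * ev m (n - (k - l)) else 0)
          = (if n = m + d then cis \<theta> * complex_of_real (if l \<le> m then Rc k l (m - l) else 0) else 0)"
        using assms unfolding ev_def d_def by auto
      have e2: "(if l \<le> n then cnj (cis \<theta>) * complex_of_real (Rc k l (n - l)) * ev m (n + (k - l)) else 0)
          = (if n = m - d then cnj (cis \<theta>) * complex_of_real (if k \<le> m then Rc k l (m - k) else 0) else 0)"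
        using assms unfolding ev_def d_def by auto
      have e3: "complex_of_real (f n) * ev m n + c * ev m n = (if n = m then complex_of_real (f m) + c else 0)"
        unfolding ev_def by (auto simp: algebra_simps)
      show ?thesis
        unfolding opA_formula[OF assms] A_def B_def C_def
        apply (simp only: add.assoc e3)
        apply (simp only: add.assoc[symmetric] e1 e2)
        by (auto simp: algebra_simps)
    qed
  qed
  have "(\<lambda>n. ((if n = m + d then A else 0) + (if n = m - d then B else 0)) + (if n = m then C else 0))
      sums ((A + B) + C)"
    by (intro sums_add sums_single)
  moreover have "A + B + C = cnj (EqR k l \<theta> f c y m)"
    by (simp add: EqR_def A_def B_def C_def d_def)
  ultimately show ?thesis using eq by simp
qed

lemma opA_lin:
  assumes "l < k"
  shows "opA k l \<theta> f (\<lambda>n. \<Sum>m\<in>S. a m * u m n) n' = (\<Sum>m\<in>S. a m * opA k l \<theta> f (u m) n')"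
  unfolding opA_formula[OF assms]
  by (auto simp: sum_distrib_left sum.distrib algebra_simps)

lemma range_perp_iff:
  assumes "l < k"
  shows "y \<in> range_perp (opA k l \<theta> f) c \<longleftrightarrow> y \<in> l2 \<and> (\<forall>m. EqR k l \<theta> f c y m = 0)"
proof
  assume y: "y \<in> range_perp (opA k l \<theta> f) c"
  have "\<forall>m. EqR k l \<theta> f c y m = 0"
  proof
    fix m
    have "l2_inner (\<lambda>n. opA k l \<theta> f (ev m) n + c * ev m n) y = 0"
      using y ev_D0 unfolding range_perp_def by blast
    moreover have "l2_inner (\<lambda>n. opA k l \<theta> f (ev m) n + c * ev m n) y = cnj (EqR k l \<theta> f c y m)"
      unfolding l2_inner_def using inner_ev_sums[OF assms] by (rule sums_unique[symmetric])
    ultimately show "EqR k l \<theta> f c y m = 0" by simp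
  qed
  then show "y \<in> l2 \<and> (\<forall>m. EqR k l \<theta> f c y m = 0)" using y unfolding range_perp_def by blast
next
  assume y: "y \<in> l2 \<and> (\<forall>m. EqR k l \<theta> f c y m = 0)"
  have "l2_inner (\<lambda>n. opA k l \<theta> f x n + c * x n) y = 0" if x: "x \<in> D0" for x
  proof -
    define S where "S = {n. x n \<noteq> 0}"
    have S: "finite S" using x unfolding D0_def S_def by simp
    have xs: "x = (\<lambda>n. \<Sum>m\<in>S. x m * ev m n)"
    proof
      fix n show "x n = (\<Sum>m\<in>S. x m * ev m n)"
        using S by (cases "n \<in> S") (auto simp: ev_def S_def if_distrib cong: if_cong)
    qed
    have "(\<lambda>n. (opA k l \<theta> f x n + c * x n) * cnj (y n)) =
          (\<lambda>n. \<Sum>m\<in>S. x m * ((opA k l \<theta> f (ev m) n + c * ev m n) * cnj (y n)))"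
    proof
      fix n
      have "opA k l \<theta> f x n = (\<Sum>m\<in>S. x m * opA k l \<theta> f (ev m) n)"
        by (subst xs) (rule opA_lin[OF assms])
      moreover have "x n = (\<Sum>m\<in>S. x m * ev m n)" by (subst xs) simp
      ultimately show "(opA k l \<theta> f x n + c * x n) * cnj (y n) =
          (\<Sum>m\<in>S. x m * ((opA k l \<theta> f (ev m) n + c * ev m n) * cnj (y n)))"
        by (simp add: sum_distrib_left sum_distrib_right sum.distrib algebra_simps)
    qed
    then have "l2_inner (\<lambda>n. opA k l \<theta> f x n + c * x n) y =
       (\<Sum>n. \<Sum>m\<in>S. x m * ((opA k l \<theta> f (ev m) n + c * ev m n) * cnj (y n)))"
      by (simp add: l2_inner_def)
    also have "\<dots> = (\<Sum>m\<in>S. \<Sum>n. x m * ((opA k l \<theta> f (ev m) n + c * ev m n) * cnj (y n)))"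
      by (rule suminf_sum) (intro summable_mult sums_summable[OF inner_ev_sums[OF assms]])
    also have "\<dots> = (\<Sum>m\<in>S. x m * cnj (EqR k l \<theta> f c y m))"
      by (intro sum.cong refl sums_unique[symmetric] sums_mult inner_ev_sums[OF assms])
    also have "\<dots> = 0" using y by simp
    finally show ?thesis .
  qed
  then show "y \<in> range_perp (opA k l \<theta> f) c" using y unfolding range_perp_def by blast
qed

lemma Rc_pos: "Rc k l n > 0"
  unfolding Rc_def rf_def by (simp add: Qf_pos)

lemma sum_fun_apply: "(\<Sum>x\<in>A. F x) n = (\<Sum>x\<in>A. F x n)"
  by (induction A rule: infinite_finite_induct) auto

function solr :: "nat \<Rightarrow> nat \<Rightarrow> real \<Rightarrow> (nat \<Rightarrow> real) \<Rightarrow> complex \<Rightarrow> nat \<Rightarrow> nat \<Rightarrow> complex" where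
  "solr k l \<theta> f c r n = (if n < l \<or> k \<le> l then 0 else if n < k then (if n = l + r then 1 else 0) else
     - (cis \<theta> * complex_of_real (if k \<le> n - (k - l) then Rc k l (n - (k - l) - k) else 0)
          * solr k l \<theta> f c r (n - (k - l) - (k - l))
        + (complex_of_real (f (n - (k - l))) + cnj c) * solr k l \<theta> f c r (n - (k - l)))
     / (cnj (cis \<theta>) * complex_of_real (Rc k l (n - (k - l) - l))))"
  by pat_completeness auto
termination
  by (relation "Wellfounded.measure (\<lambda>(k, l, \<theta>, f, c, r, n). n)") auto

declare solr.simps[simp del]

lemma cis_ne0: "cis \<theta> \<noteq> 0" "cnj (cis \<theta>) \<noteq> 0"
  by (simp_all add: cis_cnj)

lemma solr_Eq:
  assumes "l < k"
  shows "EqR k l \<theta> f c (solr k l \<theta> f c r) m = 0"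
proof (cases "l \<le> m")
  case False
  then show ?thesis
    by (simp add: EqR_def solr.simps[of k l \<theta> f c r m])
next
  case True
  define d where "d = k - l"
  have n: "\<not> (m + d < l \<or> k \<le> l)" "\<not> m + d < k" "m + d - d = m" using True assms by (auto simp: d_def)
  have den: "cnj (cis \<theta>) * complex_of_real (Rc k l (m - l)) \<noteq> 0"
    using cis_ne0 Rc_pos[of k l "m - l"] by auto
  define X where "X = cis \<theta> * complex_of_real (if k \<le> m then Rc k l (m - k) else 0) * solr k l \<theta> f c r (m - d)"
  define Y where "Y = (complex_of_real (f m) + cnj c) * solr k l \<theta> f c r m"
  define D where "D = cnj (cis \<theta>) * complex_of_real (Rc k l (m - l))"
  have s: "solr k l \<theta> f c r (m + d) = - (X + Y) / D"
    apply (subst solr.simps)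
    using n unfolding d_def[symmetric] X_def Y_def D_def by simp
  have s2: "D * solr k l \<theta> f c r (m + d) = - (X + Y)"
    using den unfolding s D_def by simp
  have "EqR k l \<theta> f c (solr k l \<theta> f c r) m = D * solr k l \<theta> f c r (m + d) + X + Y"
    unfolding EqR_def d_def[symmetric] X_def Y_def D_def using True by simp
  then show ?thesis using s2 by simp
qed

lemma solr_init:
  assumes "l < k" "r' < k - l"
  shows "solr k l \<theta> f c r (l + r') = (if r' = r then 1 else 0)"
  using assms by (subst solr.simps) auto

lemma Eq_unique:
  assumes "l < k" "Im c \<noteq> 0" "\<forall>m. EqR k l \<theta> f c y m = 0" "\<forall>n. l \<le> n \<and> n < k \<longrightarrow> y n = 0"
  shows "y n = 0"
proof (induction n rule: less_induct)
  case (less n)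
  define d where "d = k - l"
  have d: "d > 0" using assms by (simp add: d_def)
  have fc: "complex_of_real (f n') + cnj c \<noteq> 0" for n'
    using assms(2) by (auto simp: complex_eq_iff)
  show ?case
  proof (cases "n < l")
    case True
    have "EqR k l \<theta> f c y n = (complex_of_real (f n) + cnj c) * y n"
      using True assms(1) by (simp add: EqR_def)
    then show ?thesis using assms(3) fc by simp
  next
    case False
    show ?thesis
    proof (cases "n < k")
      case True then show ?thesis using False assms(4) by simp
    next
      case nk: False
      define m where "m = n - d"
      have m: "l \<le> m" "m + d = n" "m < n" "m - d < n" using nk assms(1) d by (auto simp: m_def d_def)
      have "EqR k l \<theta> f c y m = cnj (cis \<theta>) * complex_of_real (Rc k l (m - l)) * y n"
        using m less[of m] less[of "m - d"] unfolding EqR_def d_def[symmetric] by simp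
      then show ?thesis using assms(3) cis_ne0 Rc_pos[of k l "m - l"] by simp
    qed
  qed
qed

interpretation cs: vector_space cscale
  by unfold_locales (auto simp: cscale_def fun_eq_iff algebra_simps)

lemma EqR_lin:
  "EqR k l \<theta> f c (\<lambda>n. v n - (\<Sum>r\<in>A. a r * z r n)) m = EqR k l \<theta> f c v m - (\<Sum>r\<in>A. a r * EqR k l \<theta> f c (z r) m)"
  unfolding EqR_def by (simp add: sum_distrib_left sum_subtractf sum.distrib algebra_simps)

lemma dim_main:
  assumes lk: "l < k" and c: "Im c \<noteq> 0"
    and H: "\<And>y. (\<forall>m. EqR k l \<theta> f c y m = 0) \<Longrightarrow> y \<in> l2"
  shows "cs.dim (range_perp (opA k l \<theta> f) c) = k - l"
proof -
  define d where "d = k - l"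
  define V where "V = range_perp (opA k l \<theta> f) c"
  define s where "s = solr k l \<theta> f c"
  define B where "B = s ` {..<d}"
  have sV: "s r \<in> V" for r
    unfolding V_def s_def range_perp_iff[OF lk] using solr_Eq[OF lk] H by blast
  have sval: "s r (l + r') = (if r' = r then 1 else 0)" if "r' < d" for r r'
    unfolding s_def using solr_init[OF lk] that by (simp add: d_def)
  have inj: "inj_on s {..<d}"
  proof (rule inj_onI)
    fix r r' assume "r \<in> {..<d}" "r' \<in> {..<d}" "s r = s r'"
    then show "r = r'" using sval[of r r] sval[of r r'] by (auto split: if_splits)
  qed
  have cardB: "card B = d" unfolding B_def using inj by (simp add: card_image)
  have BV: "B \<subseteq> V" unfolding B_def using sV by auto
  have indep: "cs.independent B"
  proof (rule cs.independent_if_scalars_zero)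
    show "finite B" unfolding B_def by simp
  next
    fix g x assume sum0: "(\<Sum>x\<in>B. cscale (g x) x) = 0" and xB: "x \<in> B"
    obtain r where r: "r < d" "x = s r" using xB unfolding B_def by auto
    have "0 = (\<Sum>x\<in>B. cscale (g x) x) (l + r)" using sum0 by simp
    also have "\<dots> = (\<Sum>r'\<in>{..<d}. g (s r') * s r' (l + r))"
      unfolding sum_fun_apply B_def using inj by (simp add: sum.reindex cscale_def)
    also have "\<dots> = (\<Sum>r'\<in>{..<d}. if r' = r then g (s r') else 0)"
      using r sval by (intro sum.cong) auto
    also have "\<dots> = g x" using r by simp
    finally show "g x = 0" by simp
  qed
  have span: "V \<subseteq> cs.span B"
  proof
    fix v assume v: "v \<in> V"
    define w where "w = (\<Sum>r\<in>{..<d}. cscale (v (l + r)) (s r))"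
    have wB: "w \<in> cs.span B" unfolding w_def
      by (intro cs.span_sum cs.span_scale cs.span_base) (auto simp: B_def)
    have wn: "w n = (\<Sum>r\<in>{..<d}. v (l + r) * s r n)" for n
      unfolding w_def sum_fun_apply by (simp add: cscale_def)
    have vE: "\<forall>m. EqR k l \<theta> f c v m = 0" using v unfolding V_def range_perp_iff[OF lk] by blast
    have sE: "EqR k l \<theta> f c (s r) m = 0" for r m unfolding s_def by (rule solr_Eq[OF lk])
    have z: "(\<lambda>n. v n - w n) n = 0" for n
    proof (rule Eq_unique[OF lk c])
      show "\<forall>m. EqR k l \<theta> f c (\<lambda>n. v n - w n) m = 0"
        unfolding wn EqR_lin using vE sE by simp
      show "\<forall>n. l \<le> n \<and> n < k \<longrightarrow> v n - w n = 0"
      proof (intro allI impI)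
        fix n assume n: "l \<le> n \<and> n < k"
        define r0 where "r0 = n - l"
        have r0: "r0 < d" "n = l + r0" using n lk by (auto simp: r0_def d_def)
        have "w n = (\<Sum>r\<in>{..<d}. if r = r0 then v (l + r) else 0)"
          unfolding wn r0(2) using sval r0(1) by (intro sum.cong) auto
        also have "\<dots> = v n" using r0 by simp
        finally show "v n - w n = 0" by simp
      qed
    qed
    have "v = w" using z by (auto simp: fun_eq_iff)
    then show "v \<in> cs.span B" using wB by simp
  qed
  show ?thesis unfolding V_def[symmetric] d_def[symmetric]
    by (rule cs.dim_unique[OF BV span indep cardB])
qed

lemma key_ineq:
  fixes qa qb wa wb \<tau> \<sigma> \<rho> \<tau>0 :: real
  assumes rho: "0 \<le> \<rho>" "\<rho> \<le> 1"
  defines "pa \<equiv> -(\<tau> * qa - \<sigma> * qb + \<rho> * wa)"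
  defines "pb \<equiv> -(\<tau> * qb + \<sigma> * qa + \<rho> * wb)"
  shows "(pa^2 + pb^2) + (qa^2 + qb^2) + \<tau> * (pa * qa + pb * qb)
     \<le> (qa^2 + qb^2) + (wa^2 + wb^2) + \<tau>0 * (qa * wa + qb * wb)
       + (\<sigma>^2 + \<bar>\<sigma>\<bar> + \<bar>\<rho> * \<tau> - \<tau>0\<bar>) * ((qa^2 + qb^2) + (wa^2 + wb^2))"
proof -
  define Q where "Q = qa^2 + qb^2"
  define W where "W = wa^2 + wb^2"
  define Rz where "Rz = qa * wa + qb * wb"
  define Iz where "Iz = qb * wa - qa * wb"
  have id: "(pa^2 + pb^2) + (qa^2 + qb^2) + \<tau> * (pa * qa + pb * qb)
      = Q + W + \<tau>0 * Rz + (\<sigma>^2 * Q + (\<rho>^2 - 1) * W + (\<rho> * \<tau> - \<tau>0) * Rz - 2 * \<rho> * \<sigma> * Iz)"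
    unfolding pa_def pb_def Q_def W_def Rz_def Iz_def by (simp add: algebra_simps power2_eq_square)
  have Q0: "Q \<ge> 0" "W \<ge> 0" unfolding Q_def W_def by auto
  have Rb: "\<bar>Rz\<bar> \<le> Q + W"
  proof -
    have "2 * \<bar>Rz\<bar> \<le> Q + W" unfolding Rz_def Q_def W_def
      using sum_squares_ge_zero[of "qa - wa" "qb - wb"] sum_squares_ge_zero[of "qa + wa" "qb + wb"]
      by (auto simp: abs_if power2_eq_square algebra_simps)
    then show ?thesis using Q0 by linarith
  qed
  have Ib: "2 * \<bar>Iz\<bar> \<le> Q + W"
    unfolding Iz_def Q_def W_def
    using sum_squares_ge_zero[of "qb - wa" "qa + wb"] sum_squares_ge_zero[of "qb + wa" "qa - wb"]
    by (auto simp: abs_if power2_eq_square algebra_simps)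
  have t1: "\<sigma>^2 * Q \<le> \<sigma>^2 * (Q + W)" using Q0 by (simp add: mult_left_mono)
  have t2: "(\<rho>^2 - 1) * W \<le> 0"
  proof -
    have "\<rho>^2 \<le> 1" using rho by (simp add: power_le_one)
    then show ?thesis using Q0 by (simp add: mult_nonpos_nonneg)
  qed
  have t3: "(\<rho> * \<tau> - \<tau>0) * Rz \<le> \<bar>\<rho> * \<tau> - \<tau>0\<bar> * (Q + W)"
  proof -
    have "(\<rho> * \<tau> - \<tau>0) * Rz \<le> \<bar>(\<rho> * \<tau> - \<tau>0) * Rz\<bar>" by simp
    also have "\<dots> = \<bar>\<rho> * \<tau> - \<tau>0\<bar> * \<bar>Rz\<bar>" by (simp add: abs_mult)
    also have "\<dots> \<le> \<bar>\<rho> * \<tau> - \<tau>0\<bar> * (Q + W)" using Rb by (simp add: mult_left_mono)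
    finally show ?thesis .
  qed
  have t4: "- 2 * \<rho> * \<sigma> * Iz \<le> \<bar>\<sigma>\<bar> * (Q + W)"
  proof -
    have "- 2 * \<rho> * \<sigma> * Iz \<le> \<bar>2 * \<rho> * \<sigma> * Iz\<bar>" by simp
    also have "\<dots> = \<rho> * \<bar>\<sigma>\<bar> * (2 * \<bar>Iz\<bar>)" using rho by (simp add: abs_mult)
    also have "\<dots> \<le> 1 * \<bar>\<sigma>\<bar> * (Q + W)"
      using rho Ib by (intro mult_mono) auto
    finally show ?thesis by simp
  qed
  show ?thesis unfolding id using t1 t2 t3 t4
    unfolding Q_def[symmetric] W_def[symmetric] Rz_def[symmetric] by (simp add: algebra_simps)
qed

lemma re_mult_cnj_bound: "2 * \<bar>Re (a * cnj b)\<bar> \<le> (cmod a)^2 + (cmod b)^2"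
proof -
  have "Re (a * cnj b) = Re a * Re b + Im a * Im b" by simp
  moreover have "(cmod a)^2 = (Re a)^2 + (Im a)^2" "(cmod b)^2 = (Re b)^2 + (Im b)^2"
    by (simp_all add: cmod_power2)
  ultimately show ?thesis
    using sum_squares_ge_zero[of "Re a - Re b" "Im a - Im b"] sum_squares_ge_zero[of "Re a + Re b" "Im a + Im b"]
    by (auto simp: abs_if power2_eq_square algebra_simps)
qed

lemma Re_mult_cnj2: "Re (a * cnj b) = Re a * Re b + Im a * Im b" by simp

lemma fg_aux: fixes z G \<eta> :: real shows "\<bar>z\<bar> \<le> (2 - \<eta>) * (G / 2) \<Longrightarrow> (\<eta> / 2) * G \<le> G + z"
  by (simp add: abs_le_iff algebra_simps)

lemma energy_bounded:
  fixes x t :: "nat \<Rightarrow> complex" and \<rho> :: "nat \<Rightarrow> real"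
  assumes rec: "\<And>j. j \<ge> N \<Longrightarrow> x (Suc (Suc j)) + complex_of_real (\<rho> j) * x j + t j * x (Suc j) = 0"
    and rho: "\<And>j. j \<ge> N \<Longrightarrow> 0 \<le> \<rho> j \<and> \<rho> j \<le> 1"
    and tau: "\<And>j. j \<ge> N \<Longrightarrow> \<bar>Re (t j)\<bar> \<le> 2 - \<eta>" and eta: "0 < \<eta>"
    and s1: "summable (\<lambda>j. \<bar>1 - \<rho> j\<bar>)"
    and s2: "summable (\<lambda>j. \<bar>Im (t j)\<bar>)"
    and s3: "summable (\<lambda>j. \<bar>Re (t (Suc j)) - Re (t j)\<bar>)"
  shows "\<exists>B. \<forall>j\<ge>N. (cmod (x (Suc (Suc j))))^2 \<le> B"
proof -
  define F where "F j = (cmod (x (Suc (Suc j))))^2 + (cmod (x (Suc j)))^2 + Re (t j) * Re (x (Suc (Suc j)) * cnj (x (Suc j)))" for j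
  define G where "G j = (cmod (x (Suc (Suc j))))^2 + (cmod (x (Suc j)))^2" for j
  define \<epsilon> where "\<epsilon> j = (Im (t (Suc j)))^2 + \<bar>Im (t (Suc j))\<bar> + \<bar>\<rho> (Suc j) * Re (t (Suc j)) - Re (t j)\<bar>" for j
  define \<epsilon>' where "\<epsilon>' j = (2 / \<eta>) * \<epsilon> j" for j
  have eps0: "\<epsilon> j \<ge> 0" for j unfolding \<epsilon>_def by simp
  have eps'0: "\<epsilon>' j \<ge> 0" for j unfolding \<epsilon>'_def using eps0 eta by simp
  have G0: "G j \<ge> 0" for j unfolding G_def by simp
  have FG: "F j \<ge> (\<eta> / 2) * G j" if j: "j \<ge> N" for j
  proof -
    have b: "2 * \<bar>Re (x (Suc (Suc j)) * cnj (x (Suc j)))\<bar> \<le> G j"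
      unfolding G_def by (rule re_mult_cnj_bound)
    have "\<bar>Re (t j) * Re (x (Suc (Suc j)) * cnj (x (Suc j)))\<bar> \<le> (2 - \<eta>) * (G j / 2)"
    proof -
      have t1: "\<bar>Re (t j)\<bar> \<le> 2 - \<eta>" by (rule tau[OF j])
      have t2: "\<bar>Re (x (Suc (Suc j)) * cnj (x (Suc j)))\<bar> \<le> G j / 2" using b by linarith
      have t3: "0 \<le> 2 - \<eta>" using t1 by linarith
      show ?thesis unfolding abs_mult by (rule mult_mono[OF t1 t2 t3 abs_ge_zero])
    qed
    moreover have "F j = G j + Re (t j) * Re (x (Suc (Suc j)) * cnj (x (Suc j)))"
      unfolding F_def G_def by simp
    ultimately show ?thesis using fg_aux[of "Re (t j) * Re (x (Suc (Suc j)) * cnj (x (Suc j)))" \<eta> "G j"] by simp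
  qed
  have F0: "F j \<ge> 0" if "j \<ge> N" for j
  proof -
    have "0 \<le> (\<eta> / 2) * G j" using G0[of j] eta by simp
    then show ?thesis using FG[OF that] by linarith
  qed
  have step: "F (Suc j) \<le> F j + \<epsilon> j * G j" if j: "j \<ge> N" for j
  proof -
    define q where "q = x (Suc (Suc j))"
    define w where "w = x (Suc j)"
    have p: "x (Suc (Suc (Suc j))) = - (t (Suc j) * q + complex_of_real (\<rho> (Suc j)) * w)"
      using rec[of "Suc j"] j unfolding q_def w_def by (simp add: algebra_simps eq_neg_iff_add_eq_0)
    define p where "p = x (Suc (Suc (Suc j)))"
    have pa: "Re p = -(Re (t (Suc j)) * Re q - Im (t (Suc j)) * Im q + \<rho> (Suc j) * Re w)"
      using p unfolding p_def by simp
    have pb: "Im p = -(Re (t (Suc j)) * Im q + Im (t (Suc j)) * Re q + \<rho> (Suc j) * Im w)"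
      using p unfolding p_def by simp
    have "F (Suc j) = ((Re p)^2 + (Im p)^2) + ((Re q)^2 + (Im q)^2)
         + Re (t (Suc j)) * (Re p * Re q + Im p * Im q)"
      unfolding F_def q_def p_def by (simp only: cmod_power2 Re_mult_cnj2)
    also have "\<dots> \<le> ((Re q)^2 + (Im q)^2) + ((Re w)^2 + (Im w)^2) + Re (t j) * (Re q * Re w + Im q * Im w)
       + ((Im (t (Suc j)))^2 + \<bar>Im (t (Suc j))\<bar> + \<bar>\<rho> (Suc j) * Re (t (Suc j)) - Re (t j)\<bar>) * (((Re q)^2 + (Im q)^2) + ((Re w)^2 + (Im w)^2))"
    proof -
      have r: "0 \<le> \<rho> (Suc j)" "\<rho> (Suc j) \<le> 1" using rho[of "Suc j"] j by auto
      show ?thesis unfolding pa pb by (rule key_ineq[OF r])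
    qed
    also have "\<dots> = F j + \<epsilon> j * G j"
      unfolding F_def G_def \<epsilon>_def q_def w_def by (simp only: cmod_power2 Re_mult_cnj2)
    finally show ?thesis .
  qed
  have step2: "F (Suc j) \<le> F j * exp (\<epsilon>' j)" if j: "j \<ge> N" for j
  proof -
    have "\<epsilon> j * G j \<le> \<epsilon> j * ((2 / \<eta>) * F j)"
    proof (rule mult_left_mono[OF _ eps0])
      show "G j \<le> 2 / \<eta> * F j" using FG[OF j] eta by (simp add: field_simps)
    qed
    then have "F (Suc j) \<le> F j * (1 + \<epsilon>' j)" using step[OF j] unfolding \<epsilon>'_def by (simp add: algebra_simps)
    also have "\<dots> \<le> F j * exp (\<epsilon>' j)" using F0[OF j] by (intro mult_left_mono) (auto simp: exp_ge_add_one_self add.commute)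
    finally show ?thesis .
  qed
  have ind: "F (N + i) \<le> F N * exp (\<Sum>j<i. \<epsilon>' (N + j))" for i
  proof (induction i)
    case 0 then show ?case by simp
  next
    case (Suc i)
    have "F (N + Suc i) \<le> F (N + i) * exp (\<epsilon>' (N + i))" using step2[of "N + i"] by simp
    also have "\<dots> \<le> F N * exp (\<Sum>j<i. \<epsilon>' (N + j)) * exp (\<epsilon>' (N + i))"
      using Suc by (intro mult_right_mono) auto
    also have "\<dots> = F N * exp (\<Sum>j<Suc i. \<epsilon>' (N + j))" by (simp add: exp_add)
    finally show ?case .
  qed
  have sumeps: "summable \<epsilon>'"
  proof -
    have sa: "summable (\<lambda>j. \<bar>Im (t (Suc j))\<bar>)" using s2 by (subst summable_Suc_iff)
    have sb: "summable (\<lambda>j. \<bar>1 - \<rho> (Suc j)\<bar>)" using s1 by (subst summable_Suc_iff)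
    define M where "M = (\<Sum>j. \<bar>Im (t j)\<bar>)"
    have M: "\<bar>Im (t j)\<bar> \<le> M" for j
      using sum_le_suminf[OF s2, of "{j}"] unfolding M_def by simp
    have "summable (\<lambda>j. (M + 1) * \<bar>Im (t (Suc j))\<bar> + \<bar>Re (t (Suc j)) - Re (t j)\<bar> + 2 * \<bar>1 - \<rho> (Suc j)\<bar>)"
      by (intro summable_add summable_mult sa s3 sb)
    then have "summable \<epsilon>"
    proof (rule summable_comparison_test')
      fix j assume j: "j \<ge> N"
      have a: "(Im (t (Suc j)))^2 \<le> M * \<bar>Im (t (Suc j))\<bar>"
      proof -
        have "(Im (t (Suc j)))^2 = \<bar>Im (t (Suc j))\<bar> * \<bar>Im (t (Suc j))\<bar>" by (simp add: power2_eq_square)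
        also have "\<dots> \<le> M * \<bar>Im (t (Suc j))\<bar>" using M[of "Suc j"] by (rule mult_right_mono) simp
        finally show ?thesis .
      qed
      have "\<bar>\<rho> (Suc j) * Re (t (Suc j)) - Re (t j)\<bar> = \<bar>(Re (t (Suc j)) - Re (t j)) - (1 - \<rho> (Suc j)) * Re (t (Suc j))\<bar>"
        by (simp add: algebra_simps)
      also have "\<dots> \<le> \<bar>Re (t (Suc j)) - Re (t j)\<bar> + \<bar>1 - \<rho> (Suc j)\<bar> * \<bar>Re (t (Suc j))\<bar>"
        by (simp add: abs_mult[symmetric] abs_triangle_ineq4)
      also have "\<dots> \<le> \<bar>Re (t (Suc j)) - Re (t j)\<bar> + \<bar>1 - \<rho> (Suc j)\<bar> * 2"
        using tau[of "Suc j"] j eta by (intro add_left_mono mult_left_mono) auto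
      finally have b: "\<bar>\<rho> (Suc j) * Re (t (Suc j)) - Re (t j)\<bar> \<le> \<bar>Re (t (Suc j)) - Re (t j)\<bar> + 2 * \<bar>1 - \<rho> (Suc j)\<bar>"
        by simp
      show "norm (\<epsilon> j) \<le> (M + 1) * \<bar>Im (t (Suc j))\<bar> + \<bar>Re (t (Suc j)) - Re (t j)\<bar> + 2 * \<bar>1 - \<rho> (Suc j)\<bar>"
        using a b eps0[of j] unfolding \<epsilon>_def by (simp add: algebra_simps)
    qed
    then show ?thesis unfolding \<epsilon>'_def by (rule summable_mult)
  qed
  define E where "E = (\<Sum>j. \<epsilon>' (j + N))"
  have sE: "summable (\<lambda>j. \<epsilon>' (j + N))" using sumeps by simp
  have sumle: "(\<Sum>j<i. \<epsilon>' (N + j)) \<le> E" for i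
    using sum_le_suminf[OF sE, of "{..<i}"] eps'0 unfolding E_def by (simp add: add.commute)
  show ?thesis
  proof (intro exI allI impI)
    fix j assume j: "N \<le> j"
    then obtain i where i: "j = N + i" using le_Suc_ex by blast
    have "(cmod (x (Suc (Suc j))))^2 \<le> G j" unfolding G_def by simp
    also have "\<dots> \<le> (2 / \<eta>) * F j" using FG[OF j] eta by (simp add: field_simps)
    also have "\<dots> \<le> (2 / \<eta>) * (F N * exp E)"
    proof -
      have "F j \<le> F N * exp (\<Sum>j<i. \<epsilon>' (N + j))" using ind[of i] i by simp
      also have "\<dots> \<le> F N * exp E" using sumle[of i] F0[of N] by (intro mult_left_mono) auto
      finally show ?thesis using eta by (intro mult_left_mono) auto
    qed
    finally show "(cmod (x (Suc (Suc j))))^2 \<le> (2 / \<eta>) * (F N * exp E)" .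
  qed
qed

definition bv :: "(nat \<Rightarrow> real) \<Rightarrow> bool" where
  "bv a \<longleftrightarrow> summable (\<lambda>j. \<bar>a (Suc j) - a j\<bar>)"

lemma bv_bounded:
  assumes "bv a" shows "\<exists>M. \<forall>j. \<bar>a j\<bar> \<le> M"
proof -
  have s: "summable (\<lambda>j. \<bar>a (Suc j) - a j\<bar>)" using assms by (simp add: bv_def)
  define S where "S = (\<Sum>j. \<bar>a (Suc j) - a j\<bar>)"
  have "\<bar>a n\<bar> \<le> \<bar>a 0\<bar> + S" for n
  proof -
    have "\<bar>a n - a 0\<bar> = \<bar>\<Sum>j<n. a (Suc j) - a j\<bar>" by (simp add: sum_lessThan_telescope)
    also have "\<dots> \<le> (\<Sum>j<n. \<bar>a (Suc j) - a j\<bar>)" by (rule sum_abs)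
    also have "\<dots> \<le> S" unfolding S_def by (rule sum_le_suminf[OF s]) auto
    finally show ?thesis by linarith
  qed
  then show ?thesis by blast
qed

lemma bv_const: "bv (\<lambda>j. c)" by (simp add: bv_def)

lemma summ_cmp: fixes f g :: "nat \<Rightarrow> real" assumes "summable g" "\<And>j. norm (f j) \<le> g j" shows "summable f"
  by (rule summable_comparison_test'[OF assms(1)]) (rule assms(2))

lemma bv_add: "bv a \<Longrightarrow> bv b \<Longrightarrow> bv (\<lambda>j. a j + b j)"
  unfolding bv_def
proof (rule summ_cmp[OF summable_add])
  fix j
  show "norm \<bar>a (Suc j) + b (Suc j) - (a j + b j)\<bar> \<le> \<bar>a (Suc j) - a j\<bar> + \<bar>b (Suc j) - b j\<bar>"
    by simp
qed

lemma bv_summable: "summable (\<lambda>j. \<bar>a j\<bar>) \<Longrightarrow> bv a"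
  unfolding bv_def
proof (rule summ_cmp[OF summable_add])
  assume "summable (\<lambda>j. \<bar>a j\<bar>)"
  then show "summable (\<lambda>j. \<bar>a (Suc j)\<bar>)" by (subst summable_Suc_iff)
qed (auto simp: abs_triangle_ineq4)

lemma bv_mult:
  assumes "bv a" "bv b" shows "bv (\<lambda>j. a j * b j)"
proof -
  obtain Ma where Ma: "\<And>j. \<bar>a j\<bar> \<le> Ma" using bv_bounded[OF assms(1)] by blast
  obtain Mb where Mb: "\<And>j. \<bar>b j\<bar> \<le> Mb" using bv_bounded[OF assms(2)] by blast
  have sa: "summable (\<lambda>j. \<bar>a (Suc j) - a j\<bar>)" and sb: "summable (\<lambda>j. \<bar>b (Suc j) - b j\<bar>)"
    using assms by (auto simp: bv_def)
  show ?thesis unfolding bv_def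
  proof (rule summ_cmp[OF summable_add[OF summable_mult[OF sb, of Ma] summable_mult[OF sa, of Mb]]])
    fix j
    have "a (Suc j) * b (Suc j) - a j * b j = a (Suc j) * (b (Suc j) - b j) + b j * (a (Suc j) - a j)"
      by (simp add: algebra_simps)
    then have "\<bar>a (Suc j) * b (Suc j) - a j * b j\<bar> \<le> \<bar>a (Suc j)\<bar> * \<bar>b (Suc j) - b j\<bar> + \<bar>b j\<bar> * \<bar>a (Suc j) - a j\<bar>"
      by (metis abs_mult abs_triangle_ineq)
    also have "\<dots> \<le> Ma * \<bar>b (Suc j) - b j\<bar> + Mb * \<bar>a (Suc j) - a j\<bar>"
      using Ma Mb by (intro add_mono mult_right_mono) auto
    finally show "norm \<bar>a (Suc j) * b (Suc j) - a j * b j\<bar> \<le> Ma * \<bar>b (Suc j) - b j\<bar> + Mb * \<bar>a (Suc j) - a j\<bar>"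
      by simp
  qed
qed

lemma bv_cmult: "bv a \<Longrightarrow> bv (\<lambda>j. c * a j)"
  using bv_mult[OF bv_const] by blast

lemma bv_sum: "(\<And>i. i \<in> A \<Longrightarrow> bv (a i)) \<Longrightarrow> bv (\<lambda>j. \<Sum>i\<in>A. a i j)"
proof (induction A rule: infinite_finite_induct)
  case (insert x F) then show ?case by (simp add: bv_add)
qed (auto simp: bv_const)

lemma bv_prod: "(\<And>i. i \<in> A \<Longrightarrow> bv (a i)) \<Longrightarrow> bv (\<lambda>j. \<Prod>i\<in>A. a i j)"
proof (induction A rule: infinite_finite_induct)
  case (insert x F) then show ?case by (simp add: bv_mult)
qed (auto simp: bv_const)

lemma bv_inc:
  assumes "\<And>j. a j \<le> a (Suc j)" "\<And>j. a j \<le> M" shows "bv a"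
  unfolding bv_def
proof (rule summableI_nonneg_bounded)
  fix n
  have "(\<Sum>j<n. \<bar>a (Suc j) - a j\<bar>) = (\<Sum>j<n. a (Suc j) - a j)"
    using assms(1) by (intro sum.cong) auto
  also have "\<dots> = a n - a 0" by (rule sum_lessThan_telescope)
  also have "\<dots> \<le> M - a 0" using assms(2) by simp
  finally show "(\<Sum>j<n. \<bar>a (Suc j) - a j\<bar>) \<le> M - a 0" .
qed simp

lemma bv_dec:
  assumes "\<And>j. a (Suc j) \<le> a j" "\<And>j. M \<le> a j" shows "bv a"
proof -
  have "bv (\<lambda>j. - a j)" by (rule bv_inc[of _ "- M"]) (use assms in auto)
  then show ?thesis by (simp add: bv_def abs_minus_commute)
qed

lemma summable_powr_shift: "p > 1 \<Longrightarrow> summable (\<lambda>j. (real j + 1) powr (- p))"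
proof -
  assume p: "p > 1"
  have "summable (\<lambda>j. real j powr (- p))" using p by (simp add: summable_real_powr_iff)
  then have "summable (\<lambda>j. real (j + 1) powr (- p))" by (subst summable_iff_shift)
  then show ?thesis by (simp add: add.commute)
qed

lemma frac_mono:
  fixes x y \<alpha> \<beta> :: real
  assumes "0 < x + \<beta>" "x \<le> y"
  shows "\<alpha> \<le> \<beta> \<Longrightarrow> (x + \<alpha>) / (x + \<beta>) \<le> (y + \<alpha>) / (y + \<beta>)"
    and "\<beta> \<le> \<alpha> \<Longrightarrow> (y + \<alpha>) / (y + \<beta>) \<le> (x + \<alpha>) / (x + \<beta>)"
proof -
  have yb: "0 < y + \<beta>" using assms by linarith
  have key: "(x + \<alpha>) * (y + \<beta>) - (y + \<alpha>) * (x + \<beta>) = (\<alpha> - \<beta>) * (y - x)"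
    by (simp add: algebra_simps)
  show "\<alpha> \<le> \<beta> \<Longrightarrow> (x + \<alpha>) / (x + \<beta>) \<le> (y + \<alpha>) / (y + \<beta>)"
  proof -
    assume ab: "\<alpha> \<le> \<beta>"
    have "(\<alpha> - \<beta>) * (y - x) \<le> 0" using ab assms(2) by (simp add: mult_nonpos_nonneg)
    then show ?thesis using assms(1) yb key by (simp add: divide_simps)
  qed
  show "\<beta> \<le> \<alpha> \<Longrightarrow> (y + \<alpha>) / (y + \<beta>) \<le> (x + \<alpha>) / (x + \<beta>)"
  proof -
    assume ab: "\<beta> \<le> \<alpha>"
    have "(\<alpha> - \<beta>) * (y - x) \<ge> 0" using ab assms(2) by simp
    then show ?thesis using assms(1) yb key by (simp add: divide_simps)
  qed
qed

lemma bv_frac_powr: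
  fixes X :: "nat \<Rightarrow> real"
  assumes X: "\<And>j. X j \<le> X (Suc j)" "\<And>j. 0 < X j + \<beta>" and al: "0 \<le> X 0 + \<alpha>" and e: "0 \<le> e"
  shows "bv (\<lambda>j. ((X j + \<alpha>) / (X j + \<beta>)) powr e)"
proof (cases "\<alpha> \<le> \<beta>")
  case True
  show ?thesis
  proof (rule bv_inc)
    fix j
    show "((X j + \<alpha>) / (X j + \<beta>)) powr e \<le> ((X (Suc j) + \<alpha>) / (X (Suc j) + \<beta>)) powr e"
    proof (rule powr_mono2[OF e])
      have "X 0 \<le> X j" by (induction j) (use X(1) order_trans in auto)
      then show "0 \<le> (X j + \<alpha>) / (X j + \<beta>)" using al X(2)[of j] by simp
      show "(X j + \<alpha>) / (X j + \<beta>) \<le> (X (Suc j) + \<alpha>) / (X (Suc j) + \<beta>)"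
        by (rule frac_mono(1)[OF X(2) X(1) True])
    qed
    show "((X j + \<alpha>) / (X j + \<beta>)) powr e \<le> 1"
    proof (rule powr_le1[OF e])
      have "X 0 \<le> X j" by (induction j) (use X(1) order_trans in auto)
      then show "\<bar>(X j + \<alpha>) / (X j + \<beta>)\<bar> \<le> 1" using al X(2)[of j] True by (simp add: divide_simps)
    qed
  qed
next
  case False
  show ?thesis
  proof (rule bv_dec[of _ 0])
    fix j
    show "((X (Suc j) + \<alpha>) / (X (Suc j) + \<beta>)) powr e \<le> ((X j + \<alpha>) / (X j + \<beta>)) powr e"
    proof (rule powr_mono2[OF e])
      show "0 \<le> (X (Suc j) + \<alpha>) / (X (Suc j) + \<beta>)" using X(2)[of "Suc j"] False by simp
      show "(X (Suc j) + \<alpha>) / (X (Suc j) + \<beta>) \<le> (X j + \<alpha>) / (X j + \<beta>)"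
        using frac_mono(2)[OF X(2) X(1)] False by simp
    qed
  qed simp
qed

lemma frac_tendsto:
  fixes X :: "nat \<Rightarrow> real"
  assumes "filterlim X at_top sequentially"
  shows "((\<lambda>j. (X j + \<alpha>) / (X j + \<beta>)) \<longlongrightarrow> 1) sequentially"
proof -
  have Xb: "filterlim (\<lambda>j. \<beta> + X j) at_top sequentially"
    by (rule filterlim_tendsto_add_at_top[OF tendsto_const assms])
  have "((\<lambda>j. 1 + (\<alpha> - \<beta>) * inverse (\<beta> + X j)) \<longlongrightarrow> 1 + (\<alpha> - \<beta>) * 0) sequentially"
    by (intro tendsto_intros tendsto_inverse_0_at_top Xb)
  moreover have "eventually (\<lambda>j. 1 + (\<alpha> - \<beta>) * inverse (\<beta> + X j) = (X j + \<alpha>) / (X j + \<beta>)) sequentially"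
  proof -
    have "eventually (\<lambda>j. \<beta> + X j > 0) sequentially" using Xb by (simp add: filterlim_at_top_dense)
    then show ?thesis by eventually_elim (simp add: field_simps)
  qed
  ultimately show ?thesis by (simp add: tendsto_cong)
qed

lemma Qf_lower: "0 \<le> x \<Longrightarrow> (x + 1) ^ K \<le> Qf K x"
proof -
  assume x: "0 \<le> x"
  have "(\<Prod>i<K. x + 1) \<le> (\<Prod>i<K. x + 1 + real i)"
    by (rule prod_mono) (use x in auto)
  then show ?thesis by (simp add: Qf_def)
qed

lemma Qf_nonneg: "0 \<le> x \<Longrightarrow> 0 \<le> Qf K x"
  using Qf_pos[of x K] by simp

lemma Qf_logconc:
  assumes "0 \<le> x - d" "0 \<le> d"
  shows "Qf K (x - d) * Qf K (x + d) \<le> (Qf K x)^2"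
proof -
  have "Qf K (x - d) * Qf K (x + d) = (\<Prod>i<K. (x - d + 1 + real i) * (x + d + 1 + real i))"
    by (simp add: Qf_def prod.distrib)
  also have "\<dots> \<le> (\<Prod>i<K. (x + 1 + real i)^2)"
  proof (rule prod_mono)
    fix i
    have "(x - d + 1 + real i) * (x + d + 1 + real i) = (x + 1 + real i)^2 - d^2"
      by (simp add: power2_eq_square algebra_simps)
    then show "0 \<le> (x - d + 1 + real i) * (x + d + 1 + real i) \<and>
      (x - d + 1 + real i) * (x + d + 1 + real i) \<le> (x + 1 + real i)^2"
      using assms by auto
  qed
  also have "\<dots> = (Qf K x)^2" by (simp add: Qf_def prod_power_distrib)
  finally show ?thesis .
qed

lemma Qf_logconc_lower:
  assumes "0 \<le> x - d" "0 \<le> d"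
  shows "(1 - d^2 / (x + 1)^2) ^ K * (Qf K x)^2 \<le> Qf K (x - d) * Qf K (x + d)"
proof -
  define a where "a = d^2 / (x + 1)^2"
  have x1: "0 < x + 1" using assms by linarith
  have a1: "a \<le> 1" unfolding a_def using assms x1
    by (simp add: divide_simps power_mono)
  have "(1 - a) ^ K * (Qf K x)^2 = (\<Prod>i<K. (1 - a) * (x + 1 + real i)^2)"
    by (simp add: Qf_def prod.distrib prod_power_distrib)
  also have "\<dots> \<le> (\<Prod>i<K. (x - d + 1 + real i) * (x + d + 1 + real i))"
  proof (rule prod_mono)
    fix i
    define u where "u = x + 1 + real i"
    have u: "x + 1 \<le> u" "0 < u" unfolding u_def using x1 by auto
    have "d^2 \<le> a * u^2"
    proof -
      have "d^2 * (x + 1)^2 \<le> d^2 * u^2" using u x1 by (intro mult_left_mono power_mono) auto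
      then show ?thesis unfolding a_def using x1 by (simp add: field_simps)
    qed
    moreover have e: "(x - d + 1 + real i) * (x + d + 1 + real i) = u^2 - d^2"
      unfolding u_def by (simp add: power2_eq_square algebra_simps)
    ultimately have g2: "(1 - a) * u^2 \<le> u^2 - d^2" by (simp add: algebra_simps)
    have g1: "0 \<le> (1 - a) * u^2" using a1 by simp
    have u_eq: "x + 1 + real i = u" unfolding u_def ..
    show "0 \<le> (1 - a) * (x + 1 + real i)^2 \<and>
       (1 - a) * (x + 1 + real i)^2 \<le> (x - d + 1 + real i) * (x + d + 1 + real i)"
      unfolding u_eq e using g1 g2 by simp
  qed
  also have "\<dots> = Qf K (x - d) * Qf K (x + d)"
    by (simp add: Qf_def prod.distrib)
  finally show ?thesis unfolding a_def .
qed

lemma Qf_shift_upper: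
  assumes "0 \<le> x" "0 \<le> d"
  shows "Qf K (x + d) \<le> (1 + d) ^ K * Qf K x"
proof -
  have "Qf K (x + d) = (\<Prod>i<K. x + d + 1 + real i)" by (simp add: Qf_def add.assoc)
  also have "\<dots> \<le> (\<Prod>i<K. (1 + d) * (x + 1 + real i))"
  proof (rule prod_mono)
    fix i
    have "x + d + 1 + real i \<le> (1 + d) * (x + 1 + real i)"
      using assms by (simp add: algebra_simps mult_nonneg_nonneg)
    then show "0 \<le> x + d + 1 + real i \<and> x + d + 1 + real i \<le> (1 + d) * (x + 1 + real i)"
      using assms by simp
  qed
  also have "\<dots> = (1 + d) ^ K * Qf K x" by (simp add: Qf_def prod.distrib)
  finally show ?thesis .
qed

lemma H_decomp:
  fixes x d L :: real
  assumes "0 < x + L" "0 \<le> x" "0 \<le> d"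
  shows "(\<Prod>i<K. ((x + d + 1 + real i) / (x + L)) powr (1/4) * ((x + L) / (x + 1 + real i)) powr (3/4))
     = (x + L) powr (real K / 2) * Qf K (x + d) powr (1/4) / Qf K x powr (3/4)"
proof (induction K)
  case 0
  then show ?case using assms by (simp add: Qf_def)
next
  case (Suc K)
  define A where "A = x + d + 1 + real K"
  define B where "B = x + 1 + real K"
  define C where "C = x + L"
  have pos: "0 < A" "0 < B" "0 < C" using assms by (auto simp: A_def B_def C_def)
  have Qpos: "0 < Qf K x" "0 < Qf K (x + d)" using assms by (auto intro: Qf_pos)
  have Cp: "C powr (real (Suc K) / 2) = C powr (real K / 2) * C powr (3/4) / C powr (1/4)"
  proof -
    have h: "C powr (3/4) / C powr (1/4) = C powr (1/2)"
    proof -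
      have "C powr (3/4 - 1/4) = C powr (3/4) / C powr (1/4)" by (rule powr_diff)
      then show ?thesis by simp
    qed
    have "real (Suc K) / 2 = real K / 2 + 1/2" by (simp add: field_simps)
    then have "C powr (real (Suc K) / 2) = C powr (real K / 2) * C powr (1/2)"
      by (metis powr_add)
    also have "\<dots> = C powr (real K / 2) * (C powr (3/4) / C powr (1/4))" by (simp add: h)
    finally show ?thesis by simp
  qed
  have "(\<Prod>i<Suc K. ((x + d + 1 + real i) / (x + L)) powr (1/4) * ((x + L) / (x + 1 + real i)) powr (3/4))
     = C powr (real K / 2) * Qf K (x + d) powr (1/4) / Qf K x powr (3/4)
       * ((A / C) powr (1/4) * (C / B) powr (3/4))"
    using Suc by (simp add: A_def B_def C_def)
  also have "\<dots> = C powr (real (Suc K) / 2) * (Qf K (x + d) * A) powr (1/4) / (Qf K x * B) powr (3/4)"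
    unfolding Cp using pos Qpos by (simp add: powr_mult powr_divide field_simps)
  also have "\<dots> = C powr (real (Suc K) / 2) * Qf (Suc K) (x + d) powr (1/4) / Qf (Suc K) x powr (3/4)"
    by (simp add: Qf_Suc A_def B_def add_ac)
  finally show ?case by (simp add: C_def)
qed

definition Qb :: "nat \<Rightarrow> nat \<Rightarrow> real \<Rightarrow> real" where
  "Qb k l x = Qf k x * Qf l x"

lemma Qb_pos: "0 \<le> x \<Longrightarrow> 0 < Qb k l x"
  unfolding Qb_def by (simp add: Qf_pos)

lemma Rc_Qb: "Rc k l n = sqrt (Qb k l (real n))"
  unfolding Rc_def rf_def Qb_def by (simp add: real_sqrt_mult)

lemma Qb_lower: "0 \<le> x \<Longrightarrow> (x + 1) ^ (k + l) \<le> Qb k l x"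
  unfolding Qb_def power_add by (intro mult_mono Qf_lower) (auto simp: Qf_nonneg)

lemma Qb_logconc:
  assumes "0 \<le> x - d" "0 \<le> d"
  shows "Qb k l (x - d) * Qb k l (x + d) \<le> (Qb k l x)^2"
proof -
  have "Qb k l (x - d) * Qb k l (x + d) = (Qf k (x - d) * Qf k (x + d)) * (Qf l (x - d) * Qf l (x + d))"
    by (simp add: Qb_def algebra_simps)
  also have "\<dots> \<le> (Qf k x)^2 * (Qf l x)^2"
    using assms by (intro mult_mono Qf_logconc) (auto intro!: mult_nonneg_nonneg Qf_nonneg)
  also have "\<dots> = (Qb k l x)^2" by (simp add: Qb_def power_mult_distrib)
  finally show ?thesis .
qed

lemma Qb_logconc_lower:
  assumes "0 \<le> x - d" "0 \<le> d"
  shows "(1 - d^2 / (x + 1)^2) ^ (k + l) * (Qb k l x)^2 \<le> Qb k l (x - d) * Qb k l (x + d)"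
proof -
  define a where "a = 1 - d^2 / (x + 1)^2"
  have a0: "0 \<le> a"
  proof -
    have x1: "0 < x + 1" using assms by linarith
    have "d^2 \<le> (x + 1)^2" using assms by (intro power_mono) auto
    then show ?thesis unfolding a_def using x1 by (simp add: field_simps)
  qed
  have "a ^ (k + l) * (Qb k l x)^2 = (a ^ k * (Qf k x)^2) * (a ^ l * (Qf l x)^2)"
    by (simp add: Qb_def power_add power_mult_distrib algebra_simps)
  also have "\<dots> \<le> (Qf k (x - d) * Qf k (x + d)) * (Qf l (x - d) * Qf l (x + d))"
    using assms a0 unfolding a_def
    by (intro mult_mono Qf_logconc_lower) (auto intro!: mult_nonneg_nonneg Qf_nonneg)
  also have "\<dots> = Qb k l (x - d) * Qb k l (x + d)" by (simp add: Qb_def algebra_simps)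
  finally show ?thesis unfolding a_def .
qed

lemma Qb_shift_upper:
  assumes "0 \<le> x" "0 \<le> d"
  shows "Qb k l (x + d) \<le> (1 + d) ^ (k + l) * Qb k l x"
proof -
  have "Qb k l (x + d) \<le> ((1 + d) ^ k * Qf k x) * ((1 + d) ^ l * Qf l x)"
    unfolding Qb_def using assms
    by (intro mult_mono Qf_shift_upper) (auto intro!: mult_nonneg_nonneg Qf_nonneg)
  then show ?thesis by (simp add: Qb_def power_add algebra_simps)
qed

lemma powr14_sq: "0 \<le> q \<Longrightarrow> (q powr (1/4))^2 = sqrt q"
proof -
  assume q: "0 \<le> q"
  have "(q powr (1/4))^2 = q powr (1/4) * q powr (1/4)" by (simp add: power2_eq_square)
  also have "\<dots> = q powr (1/4 + 1/4)" by (rule powr_add[symmetric])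
  also have "\<dots> = sqrt q" using q by (simp add: powr_half_sqrt)
  finally show ?thesis .
qed

lemma rho_bounds:
  fixes x d :: real and k l :: nat
  assumes "0 \<le> x - d" "0 \<le> d"
  defines "\<rho> \<equiv> Qb k l (x - d) powr (1/4) * Qb k l (x + d) powr (1/4) / (Qb k l x powr (1/4))^2"
  shows "0 \<le> \<rho>" "\<rho> \<le> 1" "1 - \<rho> \<le> real (k + l) * d^2 / (x + 1)^2"
proof -
  have x0: "0 \<le> x" using assms by linarith
  have p: "0 < Qb k l (x - d)" "0 < Qb k l (x + d)" "0 < Qb k l x" using assms x0 by (auto intro!: Qb_pos)
  define rr where "rr = Qb k l (x - d) * Qb k l (x + d) / (Qb k l x * Qb k l x)"
  have rho: "\<rho> = rr powr (1/4)"
    unfolding \<rho>_def rr_def by (simp add: powr_mult powr_divide power2_eq_square)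
  have rr0: "0 \<le> rr" unfolding rr_def using p by simp
  have rr1: "rr \<le> 1" unfolding rr_def using Qb_logconc[OF assms(1,2), of k l] p by (simp add: power2_eq_square)
  show "0 \<le> \<rho>" unfolding rho by simp
  show "\<rho> \<le> 1" unfolding rho using rr0 rr1 by (intro powr_le1) auto
  define a where "a = d^2 / (x + 1)^2"
  have a0: "0 \<le> a" unfolding a_def by simp
  have a1: "a \<le> 1"
  proof -
    have x1: "0 < x + 1" using x0 by linarith
    have "d^2 \<le> (x + 1)^2" using assms by (intro power_mono) auto
    then show ?thesis unfolding a_def using x1 by (simp add: field_simps)
  qed
  have "(1 - a) ^ (k + l) \<le> rr"
    using Qb_logconc_lower[OF assms(1,2), of k l] p unfolding rr_def a_def by (simp add: field_simps power2_eq_square)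
  moreover have "1 + real (k + l) * (- a) \<le> (1 + (- a)) ^ (k + l)"
    by (rule Bernoulli_inequality) (use a1 in simp)
  moreover have "rr \<le> \<rho>"
  proof -
    have "rr powr 1 \<le> rr powr (1/4)" using rr0 rr1 by (intro powr_mono') auto
    then show ?thesis unfolding rho using rr0 by simp
  qed
  ultimately show "1 - \<rho> \<le> real (k + l) * d^2 / (x + 1)^2" unfolding a_def by simp
qed

lemma im_bound:
  fixes x d :: real
  assumes "0 \<le> x" "0 \<le> d" "3 \<le> k + l"
  shows "Qb k l (x + d) powr (1/4) / (Qb k l x powr (1/4))^3 \<le> ((1 + d) ^ (k + l)) powr (1/4) * (x + 1) powr (- 3/2)"
proof -
  have p: "0 < Qb k l (x + d)" "0 < Qb k l x" using assms by (auto intro!: Qb_pos)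
  have e1: "Qb k l (x + d) powr (1/4) / (Qb k l x powr (1/4))^3 =
     (Qb k l (x + d) / Qb k l x) powr (1/4) * inverse (sqrt (Qb k l x))"
  proof -
    have "(Qb k l x powr (1/4))^3 = Qb k l x powr (1/4) * (Qb k l x powr (1/4))^2"
      by (simp add: power3_eq_cube power2_eq_square)
    also have "\<dots> = Qb k l x powr (1/4) * sqrt (Qb k l x)" using p by (simp add: powr14_sq)
    finally show ?thesis using p by (simp add: powr_divide field_simps)
  qed
  have b1: "(Qb k l (x + d) / Qb k l x) powr (1/4) \<le> ((1 + d) ^ (k + l)) powr (1/4)"
    using Qb_shift_upper[OF assms(1,2), of k l] p by (intro powr_mono2) (auto simp: field_simps)
  have b2: "inverse (sqrt (Qb k l x)) \<le> (x + 1) powr (- 3/2)"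
  proof -
    have x1: "1 \<le> x + 1" using assms by simp
    have "(x + 1) ^ 3 \<le> (x + 1) ^ (k + l)" by (rule power_increasing[OF assms(3) x1])
    also have "\<dots> \<le> Qb k l x" by (rule Qb_lower[OF assms(1)])
    finally have "sqrt ((x + 1) ^ 3) \<le> sqrt (Qb k l x)" by simp
    moreover have "sqrt ((x + 1) ^ 3) = (x + 1) powr (3/2)"
      using x1 powr_half_sqrt_powr[of "x + 1" 3] by (simp add: powr_realpow)
    moreover have "0 < (x + 1) powr (3/2)" using x1 by simp
    ultimately have "inverse (sqrt (Qb k l x)) \<le> inverse ((x + 1) powr (3/2))"
      by (intro le_imp_inverse_le) auto
    then show ?thesis by (simp add: powr_minus)
  qed
  show ?thesis unfolding e1 using p by (intro mult_mono b1 b2) auto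
qed

definition hf :: "real \<Rightarrow> real \<Rightarrow> real \<Rightarrow> nat \<Rightarrow> real" where
  "hf d L x i = ((x + d + 1 + real i) / (x + L)) powr (1/4) * ((x + L) / (x + 1 + real i)) powr (3/4)"

lemma Hh_decomp:
  fixes x d L :: real
  assumes "0 < x + L" "0 \<le> x" "0 \<le> d"
  shows "(x + L) powr (real (k + l) / 2) * Qb k l (x + d) powr (1/4) / (Qb k l x powr (1/4))^3
     = (\<Prod>i<k. hf d L x i) * (\<Prod>i<l. hf d L x i)"
proof -
  have p: "0 < Qf k x" "0 < Qf l x" "0 < Qf k (x + d)" "0 < Qf l (x + d)" using assms by (auto intro!: Qf_pos)
  have c3: "(Qb k l x powr (1/4))^3 = Qf k x powr (3/4) * Qf l x powr (3/4)"
  proof -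
    have "(Qb k l x powr (1/4))^3 = Qb k l x powr (of_nat 3 * (1/4))"
      by (rule powr_power) (use p in \<open>simp add: Qb_def\<close>)
    then show ?thesis by (simp add: Qb_def powr_mult)
  qed
  have cL: "(x + L) powr (real (k + l) / 2) = (x + L) powr (real k / 2) * (x + L) powr (real l / 2)"
    by (simp add: powr_add[symmetric] add_divide_distrib)
  show ?thesis
    unfolding hf_def H_decomp[OF assms] c3 cL
    using p by (simp add: Qb_def powr_mult field_simps)
qed

lemma hf_bv:
  fixes X :: "nat \<Rightarrow> real"
  assumes X: "\<And>j. X j \<le> X (Suc j)" "\<And>j. 1 \<le> X j" and d: "0 \<le> d" and L: "0 \<le> L"
  shows "bv (\<lambda>j. hf d L (X j) i)"
proof -
  have h1: "0 < X j + L" for j using X(2)[of j] L by linarith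
  have h2: "0 < X j + (1 + real i)" for j using X(2)[of j] by simp
  have h3: "0 \<le> X 0 + (d + 1 + real i)" using X(2)[of 0] d by simp
  have h4: "0 \<le> X 0 + L" using X(2)[of 0] L by simp
  have a: "bv (\<lambda>j. ((X j + (d + 1 + real i)) / (X j + L)) powr (1/4))"
    by (rule bv_frac_powr[OF X(1) h1 h3]) simp
  have b: "bv (\<lambda>j. ((X j + L) / (X j + (1 + real i))) powr (3/4))"
    by (rule bv_frac_powr[OF X(1) h2 h4]) simp
  show ?thesis using bv_mult[OF a b] unfolding hf_def by (simp add: add.assoc)
qed

lemma hf_lim:
  fixes X :: "nat \<Rightarrow> real"
  assumes "filterlim X at_top sequentially"
  shows "((\<lambda>j. hf d L (X j) i) \<longlongrightarrow> 1) sequentially"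
proof -
  have a: "((\<lambda>j. ((X j + (d + 1 + real i)) / (X j + L)) powr (1/4)) \<longlongrightarrow> 1 powr (1/4)) sequentially"
    by (rule tendsto_powr[OF frac_tendsto[OF assms] tendsto_const]) simp
  have b: "((\<lambda>j. ((X j + L) / (X j + (1 + real i))) powr (3/4)) \<longlongrightarrow> 1 powr (3/4)) sequentially"
    by (rule tendsto_powr[OF frac_tendsto[OF assms] tendsto_const]) simp
  show ?thesis using tendsto_mult[OF a b] unfolding hf_def by (simp add: add.assoc)
qed

lemma G_bv_lim:
  fixes G :: "nat \<Rightarrow> real" and M :: "nat \<Rightarrow> nat"
  assumes asym: "has_asymp_expansion G lam" and M: "\<And>j. real j + 1 \<le> real (M j)" "\<And>j. M j \<le> M (Suc j)"
  shows "bv (\<lambda>j. G (M j))" "((\<lambda>j. G (M j)) \<longlongrightarrow> lam 0) sequentially"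
proof -
  obtain C N0 where CN: "\<And>n. n \<ge> N0 \<Longrightarrow>
      \<bar>G n - (\<Sum>s\<le>2. lam s * real n powr (- real s / 2))\<bar> \<le> C * real n powr (- (real 2 + 1) / 2)"
    using asym unfolding has_asymp_expansion_def by blast
  have Mpos: "0 < real (M j)" for j using M(1)[of j] by linarith
  define a where "a j = real (M j) powr (- 1/2)" for j
  define b where "b j = real (M j) powr (- 1)" for j
  define Rm where "Rm j = G (M j) - (lam 0 + lam 1 * a j + lam 2 * b j)" for j
  have Psum: "(\<Sum>s\<le>2. lam s * real (M j) powr (- real s / 2)) = lam 0 + lam 1 * a j + lam 2 * b j" for j
    using Mpos[of j] by (simp add: numeral_2_eq_2 a_def b_def)
  have GM: "G (M j) = lam 0 + lam 1 * a j + lam 2 * b j + Rm j" for j unfolding Rm_def by simp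
  have jM: "real j \<le> real (M j)" for j using M(1)[of j] by linarith
  have Mtop: "filterlim (\<lambda>j. real (M j)) at_top sequentially"
    by (rule filterlim_at_top_mono[OF filterlim_real_sequentially]) (use jM in \<open>auto intro: always_eventually simp del: of_nat_le_iff\<close>)
  have sR: "summable (\<lambda>j. \<bar>Rm j\<bar>)"
  proof (rule summable_comparison_test'[OF summable_mult[OF summable_powr_shift[of "3/2"]]])
    show "3/2 > (1::real)" by simp
  next
    fix j assume j: "j \<ge> N0"
    have "M j \<ge> N0" using M(1)[of j] j by linarith
    then have "\<bar>Rm j\<bar> \<le> C * real (M j) powr (- 3/2)"
      using CN[of "M j"] unfolding Rm_def Psum[symmetric] by simp
    also have "\<dots> \<le> \<bar>C\<bar> * real (M j) powr (- 3/2)" by (intro mult_right_mono) auto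
    also have "\<dots> \<le> \<bar>C\<bar> * (real j + 1) powr (- (3/2))"
    proof (rule mult_left_mono)
      show "real (M j) powr (- 3/2) \<le> (real j + 1) powr (- (3/2))"
        using powr_mono2'[of "- (3/2)" "real j + 1" "real (M j)"] M(1)[of j] by simp
    qed simp
    finally show "norm \<bar>Rm j\<bar> \<le> \<bar>C\<bar> * (real j + 1) powr (- (3/2))" by simp
  qed
  have bva: "bv a"
    unfolding a_def by (rule bv_dec[of _ 0]) (use M Mpos in \<open>auto intro: powr_mono2'\<close>)
  have bvb: "bv b"
    unfolding b_def
  proof (rule bv_dec[of _ 0])
    fix j
    show "real (M (Suc j)) powr - 1 \<le> real (M j) powr - 1"
      by (rule powr_mono2') (use Mpos[of j] M(2)[of j] in auto)
  qed simp
  show "bv (\<lambda>j. G (M j))" unfolding GM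
    by (intro bv_add bv_const bv_cmult bva bvb bv_summable sR)
  have la: "a \<longlonglongrightarrow> 0" unfolding a_def by (rule tendsto_neg_powr[OF _ Mtop]) simp
  have lb: "b \<longlonglongrightarrow> 0" unfolding b_def by (rule tendsto_neg_powr[OF _ Mtop]) simp
  have lR: "Rm \<longlonglongrightarrow> 0"
    using summable_LIMSEQ_zero[OF sR] by (simp add: tendsto_rabs_zero_iff)
  have "(\<lambda>j. lam 0 + lam 1 * a j + lam 2 * b j + Rm j) \<longlonglongrightarrow> lam 0 + lam 1 * 0 + lam 2 * 0 + 0"
    by (intro tendsto_intros la lb lR)
  then show "(\<lambda>j. G (M j)) \<longlonglongrightarrow> lam 0" unfolding GM by simp
qed

lemma rec_alg:
  fixes s0 s1 s2 :: real and Y0 Y1 Y2 u F P :: complex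
  assumes s: "0 < s1" and u: "u \<noteq> 0"
    and E: "u * complex_of_real (s1^2) * Y2 + inverse u * complex_of_real (s0^2) * Y0 + F * Y1 = 0"
  shows "complex_of_real s2 * (Y2 * (u * (u * P))) + complex_of_real (s0 * s2 / s1^2) * (complex_of_real s0 * (Y0 * P))
     + (F * complex_of_real (s2 / s1^3)) * (complex_of_real s1 * (Y1 * (u * P))) = 0"
proof -
  have s1: "complex_of_real s1 \<noteq> 0" using s by simp
  have "complex_of_real s2 * (Y2 * (u * (u * P))) + complex_of_real (s0 * s2 / s1^2) * (complex_of_real s0 * (Y0 * P))
     + (F * complex_of_real (s2 / s1^3)) * (complex_of_real s1 * (Y1 * (u * P)))
     = (u * P * complex_of_real s2 / (complex_of_real s1)^2) *
       (u * complex_of_real (s1^2) * Y2 + inverse u * complex_of_real (s0^2) * Y0 + F * Y1)"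
    using s1 u by (simp add: field_simps power2_eq_square power3_eq_cube)
  then show ?thesis using E by simp
qed

lemma sqrt_Qb_lower:
  assumes "0 \<le> x" "3 \<le> k + l"
  shows "(x + 1) powr (3/2) \<le> sqrt (Qb k l x)"
proof -
  have x1: "1 \<le> x + 1" using assms by simp
  have "(x + 1) ^ 3 \<le> (x + 1) ^ (k + l)" by (rule power_increasing[OF assms(2) x1])
  also have "\<dots> \<le> Qb k l x" by (rule Qb_lower[OF assms(1)])
  finally have "sqrt ((x + 1) ^ 3) \<le> sqrt (Qb k l x)" by simp
  moreover have "sqrt ((x + 1) ^ 3) = (x + 1) powr (3/2)"
    using x1 powr_half_sqrt_powr[of "x + 1" 3] by (simp add: powr_realpow)
  ultimately show ?thesis by simp
qed

lemma class_bound: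
  assumes lk: "l < k" and K3: "3 \<le> k + l" and fpos: "\<forall>n. 0 \<le> f n"
    and asym: "has_asymp_expansion (\<lambda>n. f n * real n powr (- real (k + l) / 2)) lam" and lam0: "lam 0 < 2"
    and c: "Re c = 0" and Eq: "\<forall>m. EqR k l \<theta> f c y m = 0"
  shows "\<exists>C N. \<forall>j\<ge>N. (cmod (y (l + (r + j * (k - l)))))^2 \<le> C * (real (r + j * (k - l)) + 1) powr (- 3/2)"
proof -
  define d where "d = k - l"
  have d1: "1 \<le> d" using lk by (simp add: d_def)
  have kd: "k = l + d" using lk by (simp add: d_def)
  define X where "X j = real (r + j * d)" for j
  have X0: "0 \<le> X j" for j unfolding X_def by simp
  have XS: "X (Suc j) = X j + real d" for j unfolding X_def by simp
  have Xj: "real j \<le> X j" for j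
  proof -
    have "j \<le> r + j * d" using d1 by (metis le_add2 mult.right_neutral mult_le_mono2 trans_le_add2)
    then show ?thesis unfolding X_def by (metis of_nat_le_iff)
  qed
  define sq where "sq j = Qb k l (X j) powr (1/4)" for j
  have Qpos: "0 < Qb k l (X j)" for j using X0 by (rule Qb_pos)
  have sqpos: "0 < sq j" for j unfolding sq_def using Qpos[of j] by simp
  have sq2: "(sq j)^2 = Rc k l (r + j * d)" for j
    unfolding sq_def Rc_Qb X_def using Qpos[of j] by (simp add: powr14_sq X_def)
  define \<xi> where "\<xi> = cis \<theta>"
  define u where "u = cnj \<xi>"
  have \<xi>u: "\<xi> = inverse u" unfolding u_def \<xi>_def by (simp add: cis_cnj)
  have u0: "u \<noteq> 0" unfolding u_def \<xi>_def by (simp add: cis_cnj)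
  have cu: "inverse (cnj u) = u" unfolding u_def \<xi>_def by (simp add: cis_cnj)
  have u1: "cmod u = 1" unfolding u_def \<xi>_def by simp
  define Y where "Y j = y (l + (r + j * d))" for j
  define xx where "xx j = complex_of_real (sq j) * (Y j * u ^ j)" for j
  define \<rho> where "\<rho> j = sq j * sq (Suc (Suc j)) / (sq (Suc j))^2" for j
  define M where "M j = l + (r + Suc j * d)" for j
  define w where "w j = sq (Suc (Suc j)) / (sq (Suc j))^3" for j
  define tt where "tt j = (complex_of_real (f (M j)) + cnj c) * complex_of_real (w j)" for j
  have w0: "0 \<le> w j" for j unfolding w_def using sqpos[of "Suc j"] sqpos[of "Suc (Suc j)"] by simp
  have rec: "xx (Suc (Suc j)) + complex_of_real (\<rho> j) * xx j + tt j * xx (Suc j) = 0" for j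
  proof -
    have E: "EqR k l \<theta> f c y (M j) = 0" using Eq by simp
    have i1: "M j - l = r + Suc j * d" "M j + (k - l) = l + (r + Suc (Suc j) * d)"
      "M j - k = r + j * d" "M j - (k - l) = l + (r + j * d)" "l \<le> M j" "k \<le> M j"
      unfolding M_def d_def[symmetric] using kd d1 by (auto simp: algebra_simps)
    have E2: "u * complex_of_real ((sq (Suc j))^2) * Y (Suc (Suc j)) + inverse u * complex_of_real ((sq j)^2) * Y j
        + (complex_of_real (f (M j)) + cnj c) * Y (Suc j) = 0"
      using E unfolding EqR_def i1(1-4) using i1(5,6)
      by (simp add: sq2 Y_def M_def u_def[symmetric] \<xi>_def[symmetric] \<xi>u cu)
    show ?thesis
      using rec_alg[OF sqpos[of "Suc j"] u0 E2, of "sq (Suc (Suc j))" "u ^ j"]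
      unfolding xx_def \<rho>_def tt_def w_def by (simp add: algebra_simps)
  qed
  have rhob: "0 \<le> \<rho> j \<and> \<rho> j \<le> 1 \<and> 1 - \<rho> j \<le> real (k + l) * (real d)^2 / (X (Suc j) + 1)^2" for j
  proof -
    have a: "0 \<le> X (Suc j) - real d" "0 \<le> real d" using X0[of j] by (auto simp: XS)
    have e: "X j = X (Suc j) - real d" "X (Suc (Suc j)) = X (Suc j) + real d" by (simp_all add: XS)
    show ?thesis
      using rho_bounds[OF a, of k l] unfolding \<rho>_def sq_def e by simp
  qed
  have s1: "summable (\<lambda>j. \<bar>1 - \<rho> j\<bar>)"
  proof (rule summ_cmp[OF summable_mult[OF summable_powr_shift[of 2]]])
    fix j
    have "(real j + 1)^2 \<le> (X (Suc j) + 1)^2" using Xj[of "Suc j"] by (intro power_mono) auto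
    then have "real (k + l) * (real d)^2 / (X (Suc j) + 1)^2 \<le> real (k + l) * (real d)^2 / (real j + 1)^2"
    proof (rule divide_left_mono)
      have "0 < X (Suc j) + 1" "0 < real j + 1" using X0[of "Suc j"] by auto
      then show "0 < (X (Suc j) + 1)^2 * (real j + 1)^2" by simp
    qed simp
    also have "\<dots> = real (k + l) * (real d)^2 * (real j + 1) powr (- 2)"
      by (simp add: powr_minus powr_realpow divide_inverse)
    finally show "norm \<bar>1 - \<rho> j\<bar> \<le> real (k + l) * (real d)^2 * (real j + 1) powr (- 2)"
      using rhob[of j] by simp
  qed simp
  have Imt: "Im (tt j) = - Im c * w j" for j unfolding tt_def by simp
  have Ret: "Re (tt j) = f (M j) * w j" for j unfolding tt_def using c by simp
  define C1 where "C1 = ((1 + real d) ^ (k + l)) powr (1/4)"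
  have s2: "summable (\<lambda>j. \<bar>Im (tt j)\<bar>)"
  proof (rule summ_cmp[OF summable_mult[OF summable_powr_shift[of "3/2"]]])
    fix j
    have "w j \<le> C1 * (X (Suc j) + 1) powr (- 3/2)"
      unfolding w_def sq_def C1_def XS[of "Suc j"] using im_bound[OF X0[of "Suc j"] _ K3, of "real d"] by simp
    also have "\<dots> \<le> C1 * (real j + 1) powr (- (3/2))"
    proof (rule mult_left_mono)
      show "(X (Suc j) + 1) powr (- 3/2) \<le> (real j + 1) powr (- (3/2))"
        using powr_mono2'[of "- (3/2)" "real j + 1" "X (Suc j) + 1"] Xj[of "Suc j"] by simp
    qed (simp add: C1_def)
    finally have "\<bar>Im (tt j)\<bar> \<le> \<bar>Im c\<bar> * (C1 * (real j + 1) powr (- (3/2)))"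
      unfolding Imt abs_mult using w0[of j] by (simp add: mult_left_mono)
    then show "norm \<bar>Im (tt j)\<bar> \<le> (\<bar>Im c\<bar> * C1) * (real j + 1) powr (- (3/2))" by (simp add: mult.assoc)
  qed simp
  define g where "g n = f n * real n powr (- real (k + l) / 2)" for n
  define Hh where "Hh j = (\<Prod>i<k. hf (real d) (real l) (X (Suc j)) i) * (\<Prod>i<l. hf (real d) (real l) (X (Suc j)) i)" for j
  have Mreal: "real (M j) = X (Suc j) + real l" for j unfolding M_def X_def by simp
  have Mpos: "0 < real (M j)" for j unfolding Mreal using X0[of "Suc j"] Xj[of "Suc j"] by linarith
  have Ret2: "Re (tt j) = g (M j) * Hh j" for j
  proof -
    have h: "Hh j = real (M j) powr (real (k + l) / 2) * w j"
      unfolding Hh_def w_def sq_def Mreal XS[of "Suc j"]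
      using Hh_decomp[of "X (Suc j)" "real l" "real d" k l] X0[of "Suc j"] Xj[of "Suc j"] by simp
    have "f (M j) = g (M j) * real (M j) powr (real (k + l) / 2)"
    proof -
      have "real (M j) powr (- real (k + l) / 2) * real (M j) powr (real (k + l) / 2)
          = real (M j) powr (- real (k + l) / 2 + real (k + l) / 2)" by (rule powr_add[symmetric])
      also have "\<dots> = real (M j) powr 0" by (simp add: field_simps)
      also have "\<dots> = 1" using Mpos[of j] by simp
      finally show ?thesis unfolding g_def by (simp add: mult.assoc)
    qed
    then show ?thesis unfolding Ret h by simp
  qed
  have Xtop: "filterlim (\<lambda>j. X (Suc j)) at_top sequentially"
    by (rule filterlim_at_top_mono[OF filterlim_real_sequentially])
       (use Xj in \<open>auto intro!: always_eventually intro: order_trans[OF _ Xj] simp del: of_nat_le_iff\<close>)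
  have Xmono: "X (Suc j) \<le> X (Suc (Suc j))" for j using XS[of "Suc j"] by simp
  have X1: "1 \<le> X (Suc j)" for j using Xj[of "Suc j"] by simp
  have Mge: "real j + 1 \<le> real (M j)" for j unfolding Mreal using Xj[of "Suc j"] by simp
  have Mmono: "M j \<le> M (Suc j)" for j unfolding M_def by simp
  have gbv: "bv (\<lambda>j. g (M j))" and glim: "(\<lambda>j. g (M j)) \<longlonglongrightarrow> lam 0"
    using G_bv_lim[OF _ Mge Mmono, of g lam] asym unfolding g_def by auto
  have Hbv: "bv Hh" unfolding Hh_def
    by (intro bv_mult bv_prod hf_bv[of "\<lambda>j. X (Suc j)", OF Xmono X1]) auto
  have Hlim: "Hh \<longlonglongrightarrow> 1"
  proof -
    have "Hh \<longlonglongrightarrow> (\<Prod>i<k. 1) * (\<Prod>i<l. 1)"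
      unfolding Hh_def by (intro tendsto_mult tendsto_prod hf_lim[OF Xtop])
    then show ?thesis by simp
  qed
  have s3: "summable (\<lambda>j. \<bar>Re (tt (Suc j)) - Re (tt j)\<bar>)"
    using bv_mult[OF gbv Hbv] unfolding bv_def Ret2 by simp
  have Relim: "(\<lambda>j. Re (tt j)) \<longlonglongrightarrow> lam 0"
    using tendsto_mult[OF glim Hlim] unfolding Ret2 by simp
  define \<eta> where "\<eta> = (2 - lam 0) / 2"
  have eta: "0 < \<eta>" unfolding \<eta>_def using lam0 by simp
  have "eventually (\<lambda>j. Re (tt j) < 2 - \<eta>) sequentially"
  proof (rule order_tendstoD(2)[OF Relim])
    show "lam 0 < 2 - \<eta>" using lam0 unfolding \<eta>_def by (simp add: field_simps)
  qed
  then obtain N1 where N1: "\<And>j. j \<ge> N1 \<Longrightarrow> Re (tt j) < 2 - \<eta>"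
    unfolding eventually_sequentially by blast
  have tau: "\<bar>Re (tt j)\<bar> \<le> 2 - \<eta>" if "j \<ge> N1" for j
  proof -
    have "0 \<le> Re (tt j)" unfolding Ret using fpos w0[of j] by simp
    then show ?thesis using N1[OF that] by simp
  qed
  have rho': "0 \<le> \<rho> j \<and> \<rho> j \<le> 1" if "j \<ge> N1" for j using rhob[of j] by simp
  obtain B where B: "\<And>j. j \<ge> N1 \<Longrightarrow> (cmod (xx (Suc (Suc j))))^2 \<le> B"
    using energy_bounded[OF rec rho' tau eta s1 s2 s3] by blast
  have B0: "0 \<le> B"
  proof -
    have "0 \<le> (cmod (xx (Suc (Suc N1))))^2" by simp
    then show ?thesis using B[of N1] by linarith
  qed
  show ?thesis
  proof (intro exI allI impI)
    fix j assume j: "Suc (Suc N1) \<le> j"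
    define i where "i = j - 2"
    have i: "j = Suc (Suc i)" "N1 \<le> i" using j unfolding i_def by auto
    have cx: "cmod (xx j) = sq j * cmod (Y j)"
      unfolding xx_def using sqpos[of j] u1 by (simp add: norm_mult norm_power)
    have b1: "(sq j)^2 * (cmod (Y j))^2 \<le> B"
    proof -
      have "(cmod (xx j))^2 \<le> B" using B[OF i(2)] unfolding i(1) .
      then show ?thesis unfolding cx by (simp add: power_mult_distrib)
    qed
    have b2: "(X j + 1) powr (3/2) \<le> (sq j)^2"
      using sqrt_Qb_lower[OF X0[of j] K3] unfolding sq_def using Qpos[of j] by (simp add: powr14_sq)
    have b3: "0 < (X j + 1) powr (3/2)" using X0[of j] by simp
    have "(X j + 1) powr (3/2) * (cmod (Y j))^2 \<le> (sq j)^2 * (cmod (Y j))^2"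
      by (rule mult_right_mono[OF b2]) simp
    then have b4: "(X j + 1) powr (3/2) * (cmod (Y j))^2 \<le> B" using b1 by linarith
    have b5: "(cmod (Y j))^2 \<le> B * inverse ((X j + 1) powr (3/2))"
    proof -
      have "(cmod (Y j))^2 = inverse ((X j + 1) powr (3/2)) * ((X j + 1) powr (3/2) * (cmod (Y j))^2)"
        using b3 by simp
      also have "\<dots> \<le> inverse ((X j + 1) powr (3/2)) * B"
        by (rule mult_left_mono[OF b4]) (use b3 in simp)
      finally show ?thesis by (simp add: mult.commute)
    qed
    have e: "inverse ((X j + 1) powr (3/2)) = (X j + 1) powr (- 3/2)"
      by (simp add: powr_minus)
    show "(cmod (y (l + (r + j * (k - l)))))^2 \<le> B * (real (r + j * (k - l)) + 1) powr (- 3/2)"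
    proof -
      have "(cmod (Y j))^2 \<le> B * (X j + 1) powr (- 3/2)" using b5 unfolding e .
      then show ?thesis unfolding Y_def X_def d_def .
    qed
  qed
qed

lemma sol_l2:
  assumes lk: "l < k" and K3: "3 \<le> k + l" and fpos: "\<forall>n. 0 \<le> f n"
    and asym: "has_asymp_expansion (\<lambda>n. f n * real n powr (- real (k + l) / 2)) lam" and lam0: "lam 0 < 2"
    and c: "Re c = 0" and Eq: "\<forall>m. EqR k l \<theta> f c y m = 0"
  shows "y \<in> l2"
proof -
  define d where "d = k - l"
  have d1: "0 < d" using lk by (simp add: d_def)
  have "\<forall>r. \<exists>C N. \<forall>j\<ge>N. (cmod (y (l + (r + j * d))))^2 \<le> C * (real (r + j * d) + 1) powr (- 3/2)"
    using class_bound[OF lk K3 fpos asym lam0 c Eq] unfolding d_def by blast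
  then obtain Cf Nf where CN: "\<And>r j. j \<ge> Nf r \<Longrightarrow>
      (cmod (y (l + (r + j * d))))^2 \<le> Cf r * (real (r + j * d) + 1) powr (- 3/2)"
    by metis
  define Ct where "Ct = (\<Sum>r<d. \<bar>Cf r\<bar>)"
  define Nt where "Nt = (\<Sum>r<d. Nf r)"
  have bound: "norm ((cmod (y n))^2) \<le> Ct * (real (n - l) + 1) powr (- 3/2)" if n: "n \<ge> l + Nt * d" for n
  proof -
    define r where "r = (n - l) mod d"
    define j where "j = (n - l) div d"
    have r: "r < d" unfolding r_def using d1 by simp
    have nrj: "n = l + (r + j * d)" unfolding r_def j_def using n by simp
    have "Nt * d \<le> n - l" using n by simp
    then have "(Nt * d) div d \<le> j" unfolding j_def by (rule div_le_mono)
    then have "Nt \<le> j" using d1 by simp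
    moreover have "Nf r \<le> Nt" unfolding Nt_def using r by (intro member_le_sum) auto
    ultimately have jN: "Nf r \<le> j" by simp
    have "(cmod (y n))^2 \<le> Cf r * (real (r + j * d) + 1) powr (- 3/2)"
      using CN[OF jN] nrj by simp
    also have "\<dots> \<le> \<bar>Cf r\<bar> * (real (r + j * d) + 1) powr (- 3/2)" by (intro mult_right_mono) auto
    also have "\<dots> \<le> Ct * (real (r + j * d) + 1) powr (- 3/2)"
    proof (rule mult_right_mono)
      show "\<bar>Cf r\<bar> \<le> Ct" unfolding Ct_def using r by (intro member_le_sum) auto
    qed simp
    also have "r + j * d = n - l" using nrj by simp
    finally show ?thesis by simp
  qed
  have "summable (\<lambda>n. Ct * (real n + 1) powr (- (3/2)))"
    by (intro summable_mult summable_powr_shift) simp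
  then have "summable (\<lambda>n. Ct * (real (n + l - l) + 1) powr (- 3/2))" by simp
  then have "summable (\<lambda>n. Ct * (real (n - l) + 1) powr (- 3/2))"
    by (subst summable_iff_shift[symmetric, of _ l])
  then have "summable (\<lambda>n. (cmod (y n))^2)"
    by (rule summable_comparison_test') (rule bound)
  then show ?thesis unfolding l2_def by simp
qed

theorem corollary4p17:
  fixes k l :: nat and \<theta> :: real and f :: "nat \<Rightarrow> real" and lam :: "nat \<Rightarrow> real"
  assumes "k > l" and "k + l \<ge> 3"
    and "\<forall>n. f n \<ge> 0"
    and "has_asymp_expansion (\<lambda>n. f n * real n powr (- real (k + l) / 2)) lam"
    and "lam 0 < 2"
  shows "def_plus (opA k l \<theta> f) = k - l \<and> def_minus (opA k l \<theta> f) = k - l"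
proof
  have H: "y \<in> l2" if "Re c = 0" "\<forall>m. EqR k l \<theta> f c y m = 0" for c y
    by (rule sol_l2[OF assms(1,2,3,4,5) that])
  show "def_plus (opA k l \<theta> f) = k - l"
    unfolding def_plus_def
    by (rule dim_main[OF assms(1)]) (use H[of "\<i>"] in simp_all)
  show "def_minus (opA k l \<theta> f) = k - l"
    unfolding def_minus_def
    by (rule dim_main[OF assms(1)]) (use H[of "- \<i>"] in simp_all)
qed


end
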